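(* Let $f(q):=\sum_{n=0}^{\infty}\frac{q^{n^2}}{(-q;q)_n^2}$. Then the series defining $f(q)$ converges for every $q\in\mathbb{C}$ with $|q|\neq 1$. Moreover, if $0<|q|<1$ and $\chi(q):=(-q;q)_\infty$, then $$f(q)=\sum_{n=0}^{\infty}\frac{q^{n^2}}{(-q;q)_n^2},\qquad f(1/q)=\sum_{n=0}^{\infty}\frac{q^{n}}{(-q;q)_n^2},$$ $$f(q)=\chi(q)^{-2}\sum_{n=0}^{\infty}\left(-q^{n+1};q\right)_\infty^2q^{n^2},\qquad f(1/q)=\chi(q)^{-2}\sum_{n=0}^{\infty}\left(-q^{n+1};q\right)_\infty^2q^{n},$$ $$f(q)=\chi(q)^{-2}\sum_{n=0}^{\infty}q^{n^2}\exp\left[-2\sum_{s=1}^{\infty}\frac{q^s}{s}\sum_{d\mid s,\ d\geq n+1}(-1)^{s/d}d\right],$$ $$f(q)\chi(q)^2=\sum_{n=0}^{\infty}q^{n^2}\exp\left[-2\sum_{s=1}^{\infty}q^s\sum_{0<d\mid s,\ d\leq s/(n+1)}\frac{(-1)^d}{d}\right],$$ $$f(1/q)\chi(q)^2=\sum_{n=0}^{\infty}q^{n}\exp\left[-2\sum_{s=1}^{\infty}q^s\sum_{0<d\mid s,\ d\leq s/(n+1)}\frac{(-1)^d}{d}\right].$$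
   Context: The $q$-Pochhammer symbol is $(a;q)_n:=\prod_{j=1}^{n}(1-aq^{j-1})$ for $n\geq1$, $(a;q)_0:=1$, and $(a;q)_\infty:=\prod_{j=1}^\infty(1-aq^{j-1})$ for $|q|<1$. Divisors $d$ in the inner sums are positive integers. *)

theory Defs
  imports "HOL-Analysis.Analysis"
begin

definition qpoch :: "complex \<Rightarrow> complex \<Rightarrow> nat \<Rightarrow> complex" where
  "qpoch a q n = (\<Prod>j<n. 1 - a * q ^ j)"

definition qpoch_inf :: "complex \<Rightarrow> complex \<Rightarrow> complex" where
  "qpoch_inf a q = (\<Prod>j. 1 - a * q ^ j)"

definition f_term :: "complex \<Rightarrow> nat \<Rightarrow> complex" where
  "f_term q n = q ^ (n\<^sup>2) / (qpoch (- q) q n)\<^sup>2"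

definition f :: "complex \<Rightarrow> complex" where
  "f q = (\<Sum>n. f_term q n)"

definition chi :: "complex \<Rightarrow> complex" where
  "chi q = qpoch_inf (- q) q"

end

theory Submission
  imports Defs
begin


lemma Ln_has_sum_from1:
  fixes z :: complex assumes "norm z < 1"
  shows "((\<lambda>k. (-1)^Suc k / of_nat k * z^k) has_sum Ln (1 + z)) {1..}"
proof -
  have s: "(\<lambda>k. (-1)^Suc k / of_nat k * z^k) sums Ln (1 + z)"
    using Ln_series[OF assms] .
  have "summable (\<lambda>k. norm ((-1)^Suc k / of_nat k * z^k))"
  proof (rule summable_comparison_test)
    show "\<exists>N. \<forall>k\<ge>N. norm (norm ((-1)^Suc k / of_nat k * z^k)) \<le> norm z ^ k"
    proof (intro exI allI impI)
      fix k :: nat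
      have "norm ((-1)^Suc k / of_nat k * z^k) = norm z ^ k / of_nat k"
        by (simp add: norm_mult norm_divide norm_power)
      also have "\<dots> \<le> norm z ^ k"
      proof (cases "k = 0")
        case False
        then have "norm z ^ k / of_nat k \<le> norm z ^ k / 1"
          by (intro divide_left_mono) auto
        then show ?thesis by simp
      qed simp
      finally show "norm (norm ((-1)^Suc k / of_nat k * z^k)) \<le> norm z ^ k" by simp
    qed
    show "summable (\<lambda>k. norm z ^ k)" using assms by (simp add: summable_geometric)
  qed
  then have "((\<lambda>k. (-1)^Suc k / of_nat k * z^k) has_sum Ln (1 + z)) UNIV"
    using s by (rule norm_summable_imp_has_sum)
  then show ?thesis
    by (rule has_sum_cong_neutral[THEN iffD1, rotated -1]) auto
qed

lemma abs_bound_summable: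
  fixes r :: real assumes r: "0 \<le> r" "r < 1"
  shows "(\<lambda>(d,k). r^(d-1) * r^k) summable_on Sigma {n+1..} (\<lambda>_. {1::nat..})"
proof -
  have "(\<lambda>(d,k). r^(d-1) * r^k) summable_on Sigma {n+1..} (\<lambda>_. {1::nat..})"
  proof (rule summable_on_SigmaI)
    fix d :: nat assume "d \<in> {n+1..}"
    show "((\<lambda>k. (\<lambda>(d,k). r^(d-1) * r^k) (d, k)) has_sum (r^(d-1) * (r / (1 - r)))) {1..}"
      using has_sum_cmult_right[OF has_sum_geometric_from_1[of r], of "r^(d-1)"] r by simp
  next
    have "summable (\<lambda>d::nat. r^(d-1))"
      using summable_Suc_iff[of "\<lambda>d::nat. r^(d-1)"] r by (simp add: summable_geometric)
    then have "summable (\<lambda>d::nat. r^(d-1) * (r / (1 - r)))"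
      by (rule summable_mult2)
    then have "(\<lambda>d::nat. r^(d-1) * (r / (1 - r))) summable_on UNIV"
      using r by (subst summable_on_UNIV_nonneg_real_iff) auto
    then show "(\<lambda>d::nat. r^(d-1) * (r / (1 - r))) summable_on {n+1..}"
      by (rule summable_on_subset) auto
  next
    fix d k :: nat
    show "0 \<le> (\<lambda>(d,k). r^(d-1) * r^k) (d, k)" using r by simp
  qed
  then show ?thesis .
qed

lemma main_log:
  fixes q :: complex assumes q: "norm q < 1"
  shows "\<exists>T. (\<lambda>s. q ^ Suc s / of_nat (Suc s) *
                   (\<Sum>d\<in>{d. d dvd Suc s \<and> n + 1 \<le> d}. (-1) ^ (Suc s div d) * of_nat d)) sums (- T)
          \<and> (\<lambda>j. Ln (1 + q^(n+1+j))) sums T"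
proof -
  define r where "r = norm q"
  have r: "0 \<le> r" "r < 1" using q by (auto simp: r_def)
  define g where "g = (\<lambda>(d,k). (-1)^Suc k / of_nat k * (q^d)^k :: complex)"
  define D where "D = Sigma {n+1..} (\<lambda>_. {1::nat..})"
  have bound: "norm (g x) \<le> (\<lambda>(d,k). r^(d-1) * r^k) x" if xD: "x \<in> D" for x
  proof -
    obtain d k where x: "x = (d,k)" and dk: "d \<ge> 1" "k \<ge> 1" using xD by (cases x) (auto simp: D_def)
    have "norm (g x) = r^(d*k) / of_nat k"
      by (simp add: g_def x norm_mult norm_divide norm_power r_def power_mult)
    also have "\<dots> \<le> r^(d*k)"
    proof -
      have "r^(d*k) / of_nat k \<le> r^(d*k) / 1" using dk r by (intro divide_left_mono) auto
      then show ?thesis by simp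
    qed
    also have "\<dots> \<le> r^((d-1) + k)"
    proof (rule power_decreasing)
      obtain d' k' where "d = Suc d'" "k = Suc k'" using dk by (metis One_nat_def Suc_le_D)
      then show "d - 1 + k \<le> d * k" by simp
    qed (use r in auto)
    finally show ?thesis by (simp add: x power_add)
  qed
  have "(\<lambda>x. norm (g x)) summable_on D"
    by (rule Infinite_Sum.abs_summable_on_comparison_test'[where g="\<lambda>(d,k). r^(d-1) * r^k"])
       (use abs_bound_summable[OF r, of n] bound in \<open>auto simp: D_def\<close>)
  then have gs: "g summable_on D" by (rule abs_summable_summable)
  define T where "T = infsum g D"
  have gT: "(g has_sum T) D" using gs by (simp add: T_def)
  have inner: "((\<lambda>k. g (d, k)) has_sum Ln (1 + q^d)) {1..}" if "d \<in> {n+1..}" for d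
  proof -
    have "norm (q^d) < 1" using that r by (simp add: norm_power r_def power_less_one_iff)
    then show ?thesis using Ln_has_sum_from1[of "q^d"] by (simp add: g_def)
  qed
  have "((\<lambda>d. Ln (1 + q^d)) has_sum T) {n+1..}"
    using has_sum_Sigma'[OF gT[unfolded D_def] inner] .
  also have "?this \<longleftrightarrow> ((\<lambda>j. Ln (1 + q^(n+1+j))) has_sum T) UNIV"
    by (rule has_sum_reindex_bij_witness[of _ "\<lambda>d. d - (n+1)" "\<lambda>j. n+1+j", symmetric]) auto
  finally have L: "(\<lambda>j. Ln (1 + q^(n+1+j))) sums T" by (rule has_sum_imp_sums)
  define B where "B = (\<lambda>s::nat. {d. d dvd s \<and> n + 1 \<le> d})"
  define E where "E = Sigma {1::nat..} B"
  define G where "G = (\<lambda>(s,d). g (d, s div d))"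
  have "(G has_sum T) E \<longleftrightarrow> (g has_sum T) D"
    by (rule has_sum_reindex_bij_witness[of _ "\<lambda>(d,k). (d*k, d)" "\<lambda>(s,d). (d, s div d)"])
       (auto simp: E_def D_def B_def G_def)
  then have GT: "(G has_sum T) E" using gT by simp
  have finB: "finite (B s)" if "s \<ge> 1" for s
    by (rule finite_subset[of _ "{..s}"]) (use that in \<open>auto simp: B_def dest: dvd_imp_le\<close>)
  have "((\<lambda>s. \<Sum>d\<in>B s. G (s,d)) has_sum T) {1..}"
    by (rule has_sum_Sigma'[OF GT[unfolded E_def]]) (use finB in \<open>auto intro!: has_sum_finite\<close>)
  also have "?this \<longleftrightarrow> ((\<lambda>s. \<Sum>d\<in>B (Suc s). G (Suc s,d)) has_sum T) UNIV"
    by (rule has_sum_reindex_bij_witness[of _ "\<lambda>s. s - 1" "Suc", symmetric]) auto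
  finally have S1: "(\<lambda>s. \<Sum>d\<in>B (Suc s). G (Suc s,d)) sums T" by (rule has_sum_imp_sums)
  have eq: "(\<Sum>d\<in>B (Suc s). G (Suc s,d)) = - (q ^ Suc s / of_nat (Suc s) *
                   (\<Sum>d\<in>{d. d dvd Suc s \<and> n + 1 \<le> d}. (-1) ^ (Suc s div d) * of_nat d))" for s
  proof -
    have "G (Suc s, d) = - (q ^ Suc s / of_nat (Suc s) * ((-1) ^ (Suc s div d) * of_nat d))"
      if "d \<in> B (Suc s)" for d
    proof -
      from that obtain k where k: "Suc s = d * k" by (auto simp: B_def)
      have d0: "d > 0" "k > 0" using k by (auto intro: gr0I)
      have kk: "Suc s div d = k" using k d0 by simp
      show ?thesis using d0
        by (simp add: G_def g_def kk k power_mult[symmetric] field_simps)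
    qed
    then show ?thesis
      by (simp add: sum_distrib_left sum_negf B_def)
  qed
  have "(\<lambda>s. - (q ^ Suc s / of_nat (Suc s) *
                   (\<Sum>d\<in>{d. d dvd Suc s \<and> n + 1 \<le> d}. (-1) ^ (Suc s div d) * of_nat d))) sums T"
    using S1 by (simp only: eq)
  then have "(\<lambda>s. q ^ Suc s / of_nat (Suc s) *
                   (\<Sum>d\<in>{d. d dvd Suc s \<and> n + 1 \<le> d}. (-1) ^ (Suc s div d) * of_nat d)) sums (- T)"
    using sums_minus by fastforce
  with L show ?thesis by blast
qed

lemma qpoch_Suc: "qpoch a q (Suc n) = qpoch a q n * (1 - a * q^n)"
  by (simp add: qpoch_def)

lemma one_plus_nz:
  fixes w :: complex assumes "norm w \<noteq> 1" shows "1 + w \<noteq> 0"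
proof
  assume "1 + w = 0" then have "w = -1" by (simp add: add_eq_0_iff)
  with assms show False by simp
qed

lemma norm_pow_ne1:
  fixes q :: complex assumes "norm q \<noteq> 1" shows "norm (q ^ Suc j) \<noteq> 1"
proof -
  have "norm q < 1 \<or> norm q > 1" using assms by linarith
  then show ?thesis
  proof
    assume "norm q < 1" then have "norm q ^ Suc j < 1"
      by (simp add: power_less_one_iff del: power_Suc)
    then show ?thesis by (simp add: norm_power del: power_Suc)
  next
    assume "norm q > 1" then have "norm q ^ Suc j > 1"
      by (intro one_less_power) auto
    then show ?thesis by (simp add: norm_power del: power_Suc)
  qed
qed

lemma qpoch_nz:
  fixes q :: complex assumes "norm q \<noteq> 1" shows "qpoch (- q) q n \<noteq> 0"
proof -
  have h: "1 - - q * q ^ j \<noteq> 0" for j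
    using one_plus_nz[OF norm_pow_ne1[OF assms, of j]] by simp
  show ?thesis unfolding qpoch_def using h by (simp add: prod_zero_iff)
qed

lemma ratio_lim:
  fixes a :: "nat \<Rightarrow> complex"
  assumes "\<And>n. norm (a (Suc n)) \<le> \<rho> n * norm (a n)" "\<rho> \<longlonglongrightarrow> L" "L < 1"
  shows "summable a"
proof -
  have "eventually (\<lambda>n. \<rho> n < (1 + L) / 2) sequentially"
    using assms(2,3) by (intro order_tendstoD(2)) auto
  then obtain N where N: "\<And>n. n \<ge> N \<Longrightarrow> \<rho> n < (1 + L) / 2"
    by (auto simp: eventually_sequentially)
  show ?thesis
  proof (rule summable_ratio_test[of "(1 + L) / 2" N])
    show "(1 + L) / 2 < 1" using assms(3) by simp
    fix n assume "n \<ge> N"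
    then have "\<rho> n * norm (a n) \<le> (1 + L) / 2 * norm (a n)"
      using N by (intro mult_right_mono) (auto intro: less_imp_le)
    then show "norm (a (Suc n)) \<le> (1 + L) / 2 * norm (a n)" using assms(1)[of n] by linarith
  qed
qed

lemma norm_one_plus_ge: "1 - norm (w::complex) \<le> norm (1 + w)"
  using norm_triangle_ineq2[of 1 "-w"] by simp

lemma ratio_bound:
  fixes q w :: complex
  assumes "norm w < 1"
  shows "norm (z / (1 + w)^2) \<le> norm z / (1 - norm w)^2"
proof -
  have "0 < 1 - norm w" using assms by simp
  then have "(1 - norm w)^2 \<le> norm (1 + w)^2"
    using norm_one_plus_ge[of w] by (intro power_mono) auto
  moreover have "0 < norm (1 + w)" using norm_one_plus_ge[of w] \<open>0 < 1 - norm w\<close> by linarith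
  ultimately have "norm z / norm (1 + w)^2 \<le> norm z / (1 - norm w)^2"
    using \<open>0 < 1 - norm w\<close> by (intro divide_left_mono) auto
  then show ?thesis by (simp add: norm_divide norm_power)
qed

lemma frac_split: "a = c * d \<Longrightarrow> a / (P * b)^2 = c / P^2 * (d / (b::complex)^2)"
  by (simp add: power_mult_distrib times_divide_times_eq)

lemma summable_f_term_small:
  fixes q :: complex assumes q: "norm q < 1"
  shows "summable (f_term q)"
proof -
  define r where "r = norm q"
  have nz: "\<And>n. qpoch (- q) q n \<noteq> 0" using q by (intro qpoch_nz) auto
  have rn: "norm (q ^ Suc n) < 1" for n
    using q by (simp add: norm_power power_less_one_iff del: power_Suc)
  show ?thesis
  proof (rule ratio_lim)
    fix n
    have e: "f_term q (Suc n) = f_term q n * (q * (q^n)^2 / (1 + q ^ Suc n)^2)"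
    proof -
      have ex: "(Suc n)^2 = n^2 + (2*n+1)" by (simp add: power2_eq_square)
      have "1 + q ^ Suc n \<noteq> 0" by (metis one_plus_nz rn order_less_irrefl)
      have Q: "qpoch (- q) q (Suc n) = qpoch (- q) q n * (1 + q ^ Suc n)" by (simp add: qpoch_Suc)
      have X: "q^((Suc n)^2) = q^(n^2) * (q * (q^n)^2)"
        by (simp add: ex power_add power2_eq_square mult_2 algebra_simps)
      show ?thesis unfolding f_term_def Q by (rule frac_split[OF X])
    qed
    have "norm (q * (q^n)^2 / (1 + q ^ Suc n)^2) \<le> norm (q * (q^n)^2) / (1 - norm (q ^ Suc n))^2"
      by (rule ratio_bound[OF rn])
    also have "\<dots> = r * (r^n)^2 / (1 - r * r^n)^2"
      by (simp add: r_def norm_mult norm_power)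
    finally have b: "norm (q * (q^n)^2 / (1 + q ^ Suc n)^2) \<le> r * (r^n)^2 / (1 - r * r^n)^2" .
    show "norm (f_term q (Suc n)) \<le> r * (r^n)^2 / (1 - r * r^n)^2 * norm (f_term q n)"
      unfolding e norm_mult using mult_left_mono[OF b norm_ge_zero[of "f_term q n"]]
      by (metis mult.commute)
  next
    have "(\<lambda>n. r^n) \<longlonglongrightarrow> 0" using q by (intro LIMSEQ_power_zero) (auto simp: r_def)
    then have "(\<lambda>n. r * (r^n)^2 / (1 - r * r^n)^2) \<longlonglongrightarrow> r * 0^2 / (1 - r * 0)^2"
      using q by (intro tendsto_intros) (auto simp: r_def)
    then show "(\<lambda>n. r * (r^n)^2 / (1 - r * r^n)^2) \<longlonglongrightarrow> 0" by simp
  qed simp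
qed

lemma summable_g_small:
  fixes q :: complex assumes q: "norm q < 1"
  shows "summable (\<lambda>n. q ^ n / (qpoch (- q) q n)\<^sup>2)"
proof -
  define r where "r = norm q"
  have nz: "\<And>n. qpoch (- q) q n \<noteq> 0" using q by (intro qpoch_nz) auto
  have rn: "norm (q ^ Suc n) < 1" for n
    using q by (simp add: norm_power power_less_one_iff del: power_Suc)
  show ?thesis
  proof (rule ratio_lim)
    fix n
    have e: "q ^ Suc n / (qpoch (- q) q (Suc n))\<^sup>2 = q ^ n / (qpoch (- q) q n)\<^sup>2 * (q / (1 + q ^ Suc n)^2)"
    proof -
      have "1 + q ^ Suc n \<noteq> 0" by (metis one_plus_nz rn order_less_irrefl)
      have Q: "qpoch (- q) q (Suc n) = qpoch (- q) q n * (1 + q ^ Suc n)" by (simp add: qpoch_Suc)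
      show ?thesis unfolding Q by (rule frac_split) simp
    qed
    have "norm (q / (1 + q ^ Suc n)^2) \<le> norm q / (1 - norm (q ^ Suc n))^2"
      by (rule ratio_bound[OF rn])
    also have "\<dots> = r / (1 - r * r^n)^2"
      by (simp add: r_def norm_mult norm_power)
    finally have b: "norm (q / (1 + q ^ Suc n)^2) \<le> r / (1 - r * r^n)^2" .
    show "norm (q ^ Suc n / (qpoch (- q) q (Suc n))\<^sup>2) \<le> r / (1 - r * r^n)^2 * norm (q ^ n / (qpoch (- q) q n)\<^sup>2)"
      unfolding e norm_mult using mult_left_mono[OF b norm_ge_zero[of "q ^ n / (qpoch (- q) q n)\<^sup>2"]]
      by (metis mult.commute)
  next
    have "(\<lambda>n. r^n) \<longlonglongrightarrow> 0" using q by (intro LIMSEQ_power_zero) (auto simp: r_def)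
    then have "(\<lambda>n. r / (1 - r * r^n)^2) \<longlonglongrightarrow> r / (1 - r * 0)^2"
      using q by (intro tendsto_intros) (auto simp: r_def)
    then show "(\<lambda>n. r / (1 - r * r^n)^2) \<longlonglongrightarrow> r" by simp
  qed (use q in \<open>simp add: r_def\<close>)
qed

lemma qpoch_inv_sq:
  fixes q :: complex assumes q: "q \<noteq> 0"
  shows "(qpoch (-(1/q)) (1/q) n)^2 * q^(n*n+n) = (qpoch (-q) q n)^2"
proof (induction n)
  case 0 then show ?case by (simp add: qpoch_def)
next
  case (Suc n)
  have Q1: "qpoch (-(1/q)) (1/q) (Suc n) = qpoch (-(1/q)) (1/q) n * (1 + (1/q)^Suc n)"
    by (simp add: qpoch_Suc)
  have Q2: "qpoch (-q) q (Suc n) = qpoch (-q) q n * (1 + q^Suc n)"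
    by (simp add: qpoch_Suc)
  have e1: "(1 + (1/q)^Suc n) * q^Suc n = 1 + q^Suc n"
    using q by (simp add: power_one_over field_simps del: power_Suc)
  have ex: "Suc n * Suc n + Suc n = (n*n+n) + Suc n * 2" by simp
  have "(qpoch (-(1/q)) (1/q) (Suc n))^2 * q^(Suc n * Suc n + Suc n)
      = ((qpoch (-(1/q)) (1/q) n)^2 * q^(n*n+n)) * ((1 + (1/q)^Suc n) * q^Suc n)^2"
    unfolding Q1 ex power_add power_mult by (simp only: power_mult_distrib mult_ac)
  also have "\<dots> = (qpoch (-q) q (Suc n))^2"
    unfolding Suc.IH e1 Q2 by (simp add: power_mult_distrib)
  finally show ?case .
qed

lemma f_term_inv:
  fixes q :: complex assumes q: "q \<noteq> 0" "norm q \<noteq> 1"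
  shows "f_term (1/q) n = q ^ n / (qpoch (- q) q n)\<^sup>2"
proof -
  have P: "qpoch (- q) q n \<noteq> 0" by (rule qpoch_nz[OF q(2)])
  have "(qpoch (-(1/q)) (1/q) n)^2 = (qpoch (-q) q n)^2 / q^(n*n+n)"
    using qpoch_inv_sq[OF q(1), of n] q(1) by (simp add: eq_divide_eq)
  then have "f_term (1/q) n = (1/q)^(n*n) / ((qpoch (-q) q n)^2 / (q^(n*n) * q^n))"
    by (simp add: f_term_def power2_eq_square[of n] power_add)
  also have "\<dots> = q ^ n / (qpoch (- q) q n)\<^sup>2"
    using q(1) P by (simp add: power_one_over field_simps)
  finally show ?thesis .
qed

lemma qinf_exp:
  fixes q :: complex assumes q: "norm q < 1" and L: "(\<lambda>j. Ln (1 + q^(n+1+j))) sums T"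
  shows "qpoch_inf (-(q^(n+1))) q = exp T"
proof -
  have nz: "1 + q^(n+1+j) \<noteq> 0" for j
  proof (rule one_plus_nz)
    have "norm q ^ (n+1+j) < 1" by (rule power_less_one_iff[THEN iffD2]) (use q in auto)
    then show "norm (q^(n+1+j)) \<noteq> 1" unfolding norm_power by linarith
  qed
  have pw: "1 - -(q^(n+1)) * q^j = exp (Ln (1 + q^(n+1+j)))" for j
  proof -
    have "exp (Ln (1 + q^(n+1+j))) = 1 + q^(n+1+j)" by (rule exp_Ln[OF nz])
    then show ?thesis by (simp add: power_add)
  qed
  have S: "summable (\<lambda>j. Ln (1 + q^(n+1+j)))" using L by (rule sums_summable)
  have "qpoch_inf (-(q^(n+1))) q = (\<Prod>j. exp (Ln (1 + q^(n+1+j))))"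
    unfolding qpoch_inf_def pw ..
  also have "\<dots> = exp (\<Sum>j. Ln (1 + q^(n+1+j)))"
    by (rule prodinf_exp[OF S])
  also have "\<dots> = exp T" by (simp only: sums_unique[OF L, symmetric])
  finally show ?thesis .
qed

lemma chi_split:
  fixes q :: complex assumes q: "norm q < 1"
  shows "chi q = qpoch (-q) q n * qpoch_inf (-(q^(n+1))) q \<and> chi q \<noteq> 0"
proof -
  obtain T0 where L0: "(\<lambda>j. Ln (1 + q^(0+1+j))) sums T0" using main_log[OF q, of 0] by blast
  obtain Tn where Ln: "(\<lambda>j. Ln (1 + q^(n+1+j))) sums Tn" using main_log[OF q, of n] by blast
  have c0: "chi q = exp T0" using qinf_exp[OF q L0] by (simp add: chi_def)
  have cn: "qpoch_inf (-(q^(n+1))) q = exp Tn" using qinf_exp[OF q Ln] .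
  have "(\<lambda>i. Ln (1 + q^(0+1+(i+n)))) sums (T0 - (\<Sum>i<n. Ln (1 + q^(0+1+i))))"
    using L0 by (rule sums_split_initial_segment)
  moreover have "(\<lambda>i. Ln (1 + q^(0+1+(i+n)))) = (\<lambda>j. Ln (1 + q^(n+1+j)))"
    by (simp add: add_ac)
  ultimately have "Tn = T0 - (\<Sum>i<n. Ln (1 + q^(0+1+i)))" using Ln sums_unique2 by metis
  then have T0: "T0 = Tn + (\<Sum>i<n. Ln (1 + q^(0+1+i)))" by simp
  have nz: "1 + q^(1+i) \<noteq> 0" for i
  proof (rule one_plus_nz)
    have "norm q ^ (1+i) < 1" by (rule power_less_one_iff[THEN iffD2]) (use q in auto)
    then show "norm (q^(1+i)) \<noteq> 1" unfolding norm_power by linarith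
  qed
  have "exp (\<Sum>i<n. Ln (1 + q^(0+1+i))) = (\<Prod>i<n. exp (Ln (1 + q^(1+i))))"
    by (simp add: exp_sum)
  also have "\<dots> = qpoch (-q) q n"
    unfolding qpoch_def by (intro prod.cong refl, subst exp_Ln[OF nz]) simp
  finally have "chi q = qpoch (-q) q n * qpoch_inf (-(q^(n+1))) q"
    unfolding c0 cn T0 exp_add by simp
  moreover have "chi q \<noteq> 0" using c0 by simp
  ultimately show ?thesis by blast
qed

lemma qinf_sq_exp:
  fixes q :: complex assumes q: "norm q < 1"
  shows "(qpoch_inf (- (q ^ (n + 1))) q)\<^sup>2 = exp (- 2 * (\<Sum>s. 
                   q ^ Suc s / of_nat (Suc s) *
                   (\<Sum>d\<in>{d. d dvd Suc s \<and> n + 1 \<le> d}.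
                      (-1) ^ (Suc s div d) * of_nat d)))"
proof -
  obtain T where S: "(\<lambda>s. q ^ Suc s / of_nat (Suc s) *
                   (\<Sum>d\<in>{d. d dvd Suc s \<and> n + 1 \<le> d}. (-1) ^ (Suc s div d) * of_nat d)) sums (- T)"
      and L: "(\<lambda>j. Ln (1 + q^(n+1+j))) sums T"
    using main_log[OF q, of n] by blast
  have sT: "(\<Sum>s. q ^ Suc s / of_nat (Suc s) *
                   (\<Sum>d\<in>{d. d dvd Suc s \<and> n + 1 \<le> d}. (-1) ^ (Suc s div d) * of_nat d)) = - T"
    by (rule sums_unique[OF S, symmetric])
  have tt: "- 2 * (- T) = T + T" by simp
  show ?thesis unfolding sT qinf_exp[OF q L] tt exp_add by (rule power2_eq_square)
qed

lemma inner_eq: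
  fixes q :: complex
  shows "q ^ Suc s / of_nat (Suc s) * (\<Sum>d\<in>{d. d dvd Suc s \<and> n + 1 \<le> d}. (-1) ^ (Suc s div d) * of_nat d)
       = q ^ Suc s * (\<Sum>d\<in>{d. 0 < d \<and> d dvd Suc s \<and> real d \<le> real (Suc s) / real (n + 1)}.
                      (-1) ^ d / of_nat d)"
proof -
  define m where "m = Suc s"
  have m0: "m > 0" by (simp add: m_def)
  have "(\<Sum>d\<in>{d. d dvd m \<and> n + 1 \<le> d}. (-1) ^ (m div d) * of_nat d / of_nat m)
      = (\<Sum>e\<in>{d. 0 < d \<and> d dvd m \<and> real d \<le> real m / real (n + 1)}. (-1) ^ e / (of_nat e :: complex))"
  proof (rule sum.reindex_bij_witness[where i="\<lambda>e. m div e" and j="\<lambda>d. m div d"])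
    fix d assume "d \<in> {d. d dvd m \<and> n + 1 \<le> d}"
    then obtain k where k: "m = d * k" and d: "n + 1 \<le> d" by auto
    have k0: "k > 0" using k m0 by (auto intro: gr0I)
    have kk: "m div d = k" using k d by simp
    show "m div (m div d) = d" using kk k k0 by simp
    have "real k * real (n+1) \<le> real k * real d" using d by (intro mult_left_mono) auto
    then have "real k \<le> real m / real (n + 1)"
      by (simp add: k pos_le_divide_eq mult.commute)
    then show "m div d \<in> {d. 0 < d \<and> d dvd m \<and> real d \<le> real m / real (n + 1)}"
      using kk k k0 by auto
    show "(-1) ^ (m div d) / (of_nat (m div d) :: complex) = (-1) ^ (m div d) * of_nat d / of_nat m"
      using kk k k0 d by (simp add: field_simps)
  next
    fix e assume "e \<in> {d. 0 < d \<and> d dvd m \<and> real d \<le> real m / real (n + 1)}"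
    then obtain k where k: "m = e * k" and e0: "e > 0" and le: "real e \<le> real m / real (n + 1)" by auto
    have kk: "m div e = k" using k e0 by simp
    show "m div (m div e) = e" using kk k m0 by (metis dvd_triv_left dvd_div_mult_self mult.commute
          nonzero_mult_div_cancel_left mult_eq_0_iff neq0_conv)
    have "real e * real (n+1) \<le> real e * real k" using le by (simp add: k pos_le_divide_eq mult.commute)
    then have "n + 1 \<le> k" using e0 by simp
    then show "m div e \<in> {d. d dvd m \<and> n + 1 \<le> d}" using kk k by auto
  qed
  note X = this
  have "q ^ m / of_nat m * (\<Sum>d\<in>{d. d dvd m \<and> n + 1 \<le> d}. (-1) ^ (m div d) * of_nat d)
      = q ^ m * ((\<Sum>d\<in>{d. d dvd m \<and> n + 1 \<le> d}. (-1) ^ (m div d) * of_nat d) / of_nat m)"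
    by simp
  also have "\<dots> = q ^ m * (\<Sum>d\<in>{d. d dvd m \<and> n + 1 \<le> d}. (-1) ^ (m div d) * of_nat d / of_nat m)"
    by (simp only: sum_divide_distrib)
  also have "\<dots> = q ^ m * (\<Sum>d\<in>{d. 0 < d \<and> d dvd m \<and> real d \<le> real m / real (n + 1)}. (-1) ^ d / of_nat d)"
    by (simp only: X)
  finally have "q ^ m / of_nat m * (\<Sum>d\<in>{d. d dvd m \<and> n + 1 \<le> d}. (-1) ^ (m div d) * of_nat d)
       = q ^ m * (\<Sum>d\<in>{d. 0 < d \<and> d dvd m \<and> real d \<le> real m / real (n + 1)}. (-1) ^ d / of_nat d)" .
  then show ?thesis by (simp only: m_def)
qed


lemma helper_sq: "(P::complex) \<noteq> 0 \<Longrightarrow> (P*Q)^2 * (x / P^2) = Q^2 * x"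
  by (simp add: power_mult_distrib)

lemma part1:
  fixes q :: complex assumes q: "norm q \<noteq> 1" shows "summable (f_term q)"
proof (cases "norm q < 1")
  case True then show ?thesis by (rule summable_f_term_small)
next
  case False
  then have q1: "norm q > 1" using q by simp
  define p where "p = 1 / q"
  have q0: "q \<noteq> 0" using q1 by auto
  have p: "norm p < 1" "p \<noteq> 0" using q1 q0 by (auto simp: p_def norm_divide divide_less_eq)
  have pq: "1 / p = q" by (simp add: p_def)
  have "f_term q = (\<lambda>n. p^n / (qpoch (-p) p n)^2)"
  proof
    fix n show "f_term q n = p^n / (qpoch (-p) p n)^2"
      using f_term_inv[of p n] p by (simp add: pq)
  qed
  then show ?thesis using summable_g_small[OF p(1)] by simp
qed

lemma part2:
  fixes q :: complex assumes qq: "0 < norm q" "norm q < 1"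
  shows "f q = (\<Sum>n. q ^ (n\<^sup>2) / (qpoch (- q) q n)\<^sup>2)"
      and "f (1 / q) = (\<Sum>n. q ^ n / (qpoch (- q) q n)\<^sup>2)"
      and "f q = 1 / (chi q)\<^sup>2 *
               (\<Sum>n. (qpoch_inf (- (q ^ (n + 1))) q)\<^sup>2 * q ^ (n\<^sup>2))"
      and "f (1 / q) = 1 / (chi q)\<^sup>2 *
               (\<Sum>n. (qpoch_inf (- (q ^ (n + 1))) q)\<^sup>2 * q ^ n)"
      and "f q = 1 / (chi q)\<^sup>2 *
               (\<Sum>n. q ^ (n\<^sup>2) * exp (- 2 * (\<Sum>s. 
                   q ^ Suc s / of_nat (Suc s) *
                   (\<Sum>d\<in>{d. d dvd Suc s \<and> n + 1 \<le> d}.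
                      (-1) ^ (Suc s div d) * of_nat d))))"
      and "f q * (chi q)\<^sup>2 =
               (\<Sum>n. q ^ (n\<^sup>2) * exp (- 2 * (\<Sum>s.
                   q ^ Suc s *
                   (\<Sum>d\<in>{d. 0 < d \<and> d dvd Suc s \<and> real d \<le> real (Suc s) / real (n + 1)}.
                      (-1) ^ d / of_nat d))))"
      and "f (1 / q) * (chi q)\<^sup>2 =
               (\<Sum>n. q ^ n * exp (- 2 * (\<Sum>s.
                   q ^ Suc s *
                   (\<Sum>d\<in>{d. 0 < d \<and> d dvd Suc s \<and> real d \<le> real (Suc s) / real (n + 1)}.
                      (-1) ^ d / of_nat d))))"
proof -
  have q0: "q \<noteq> 0" and q: "norm q < 1" and q1: "norm q \<noteq> 1" using qq by auto
  have cnz: "chi q \<noteq> 0" using chi_split[OF q, of 0] by blast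
  have split: "\<And>n. chi q = qpoch (-q) q n * qpoch_inf (-(q^(n+1))) q" using chi_split[OF q] by blast
  have Pnz: "\<And>n. qpoch (-q) q n \<noteq> 0" by (rule qpoch_nz[OF q1])
  have E: "\<And>n. (qpoch_inf (- (q ^ (n + 1))) q)\<^sup>2 = exp (- 2 * (\<Sum>s. 
                   q ^ Suc s / of_nat (Suc s) *
                   (\<Sum>d\<in>{d. d dvd Suc s \<and> n + 1 \<le> d}.
                      (-1) ^ (Suc s div d) * of_nat d)))"
    by (rule qinf_sq_exp[OF q])
  have sf: "summable (f_term q)" by (rule summable_f_term_small[OF q])
  have sg: "summable (\<lambda>n. q ^ n / (qpoch (- q) q n)\<^sup>2)" by (rule summable_g_small[OF q])
  show A1: "f q = (\<Sum>n. q ^ (n\<^sup>2) / (qpoch (- q) q n)\<^sup>2)" by (simp add: f_def f_term_def)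
  show A2: "f (1 / q) = (\<Sum>n. q ^ n / (qpoch (- q) q n)\<^sup>2)"
    unfolding f_def by (rule arg_cong[where f=suminf], rule ext, rule f_term_inv[OF q0 q1])
  have t3: "(qpoch_inf (- (q ^ (n + 1))) q)\<^sup>2 * q ^ (n\<^sup>2) = (chi q)^2 * f_term q n" for n
    unfolding split[of n] f_term_def by (rule helper_sq[OF Pnz, symmetric])
  have t4: "(qpoch_inf (- (q ^ (n + 1))) q)\<^sup>2 * q ^ n = (chi q)^2 * (q ^ n / (qpoch (- q) q n)\<^sup>2)" for n
    unfolding split[of n] by (rule helper_sq[OF Pnz, symmetric])
  have B3: "(\<Sum>n. (qpoch_inf (- (q ^ (n + 1))) q)\<^sup>2 * q ^ (n\<^sup>2)) = (chi q)^2 * f q"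
    unfolding t3 f_def by (rule suminf_mult[OF sf])
  have B4: "(\<Sum>n. (qpoch_inf (- (q ^ (n + 1))) q)\<^sup>2 * q ^ n) = (chi q)^2 * f (1/q)"
    unfolding t4 A2 by (rule suminf_mult[OF sg])
  show A3: "f q = 1 / (chi q)\<^sup>2 * (\<Sum>n. (qpoch_inf (- (q ^ (n + 1))) q)\<^sup>2 * q ^ (n\<^sup>2))"
    unfolding B3 using cnz by simp
  show A4: "f (1 / q) = 1 / (chi q)\<^sup>2 * (\<Sum>n. (qpoch_inf (- (q ^ (n + 1))) q)\<^sup>2 * q ^ n)"
    unfolding B4 using cnz by simp
  have R5: "(\<lambda>n. (qpoch_inf (- (q ^ (n + 1))) q)\<^sup>2 * q ^ (n\<^sup>2)) = (\<lambda>n. q ^ (n\<^sup>2) * exp (- 2 * (\<Sum>s. 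
                   q ^ Suc s / of_nat (Suc s) *
                   (\<Sum>d\<in>{d. d dvd Suc s \<and> n + 1 \<le> d}.
                      (-1) ^ (Suc s div d) * of_nat d))))"
  proof
    fix n show "(qpoch_inf (- (q ^ (n + 1))) q)\<^sup>2 * q ^ (n\<^sup>2) = q ^ (n\<^sup>2) * exp (- 2 * (\<Sum>s. 
                   q ^ Suc s / of_nat (Suc s) *
                   (\<Sum>d\<in>{d. d dvd Suc s \<and> n + 1 \<le> d}.
                      (-1) ^ (Suc s div d) * of_nat d)))"
      unfolding E by (rule mult.commute)
  qed
  have R7: "(\<lambda>n. (qpoch_inf (- (q ^ (n + 1))) q)\<^sup>2 * q ^ n) = (\<lambda>n. q ^ n * exp (- 2 * (\<Sum>s. 
                   q ^ Suc s / of_nat (Suc s) *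
                   (\<Sum>d\<in>{d. d dvd Suc s \<and> n + 1 \<le> d}.
                      (-1) ^ (Suc s div d) * of_nat d))))"
  proof
    fix n show "(qpoch_inf (- (q ^ (n + 1))) q)\<^sup>2 * q ^ n = q ^ n * exp (- 2 * (\<Sum>s. 
                   q ^ Suc s / of_nat (Suc s) *
                   (\<Sum>d\<in>{d. d dvd Suc s \<and> n + 1 \<le> d}.
                      (-1) ^ (Suc s div d) * of_nat d)))"
      unfolding E by (rule mult.commute)
  qed
  show A5: "f q = 1 / (chi q)\<^sup>2 *
               (\<Sum>n. q ^ (n\<^sup>2) * exp (- 2 * (\<Sum>s. 
                   q ^ Suc s / of_nat (Suc s) *
                   (\<Sum>d\<in>{d. d dvd Suc s \<and> n + 1 \<le> d}.
                      (-1) ^ (Suc s div d) * of_nat d))))"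
    using A3 unfolding R5 .
  show "f q * (chi q)\<^sup>2 =
               (\<Sum>n. q ^ (n\<^sup>2) * exp (- 2 * (\<Sum>s.
                   q ^ Suc s *
                   (\<Sum>d\<in>{d. 0 < d \<and> d dvd Suc s \<and> real d \<le> real (Suc s) / real (n + 1)}.
                      (-1) ^ d / of_nat d))))"
    unfolding mult.commute[of "f q"] using B3[symmetric] unfolding R5 inner_eq .
  show "f (1 / q) * (chi q)\<^sup>2 =
               (\<Sum>n. q ^ n * exp (- 2 * (\<Sum>s.
                   q ^ Suc s *
                   (\<Sum>d\<in>{d. 0 < d \<and> d dvd Suc s \<and> real d \<le> real (Suc s) / real (n + 1)}.
                      (-1) ^ d / of_nat d))))"
    unfolding mult.commute[of "f (1/q)"] using B4[symmetric] unfolding R7 inner_eq .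
qed

theorem theorem2:
  shows "(\<forall>q::complex. norm q \<noteq> 1 \<longrightarrow> summable (f_term q))
    \<and> (\<forall>q::complex. 0 < norm q \<and> norm q < 1 \<longrightarrow>
        f q = (\<Sum>n. q ^ (n\<^sup>2) / (qpoch (- q) q n)\<^sup>2)
      \<and> f (1 / q) = (\<Sum>n. q ^ n / (qpoch (- q) q n)\<^sup>2)
      \<and> f q = 1 / (chi q)\<^sup>2 *
               (\<Sum>n. (qpoch_inf (- (q ^ (n + 1))) q)\<^sup>2 * q ^ (n\<^sup>2))
      \<and> f (1 / q) = 1 / (chi q)\<^sup>2 *
               (\<Sum>n. (qpoch_inf (- (q ^ (n + 1))) q)\<^sup>2 * q ^ n)
      \<and> f q = 1 / (chi q)\<^sup>2 *
               (\<Sum>n. q ^ (n\<^sup>2) * exp (- 2 * (\<Sum>s. 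
                   q ^ Suc s / of_nat (Suc s) *
                   (\<Sum>d\<in>{d. d dvd Suc s \<and> n + 1 \<le> d}.
                      (-1) ^ (Suc s div d) * of_nat d))))
      \<and> f q * (chi q)\<^sup>2 =
               (\<Sum>n. q ^ (n\<^sup>2) * exp (- 2 * (\<Sum>s.
                   q ^ Suc s *
                   (\<Sum>d\<in>{d. 0 < d \<and> d dvd Suc s \<and> real d \<le> real (Suc s) / real (n + 1)}.
                      (-1) ^ d / of_nat d))))
      \<and> f (1 / q) * (chi q)\<^sup>2 =
               (\<Sum>n. q ^ n * exp (- 2 * (\<Sum>s.
                   q ^ Suc s *
                   (\<Sum>d\<in>{d. 0 < d \<and> d dvd Suc s \<and> real d \<le> real (Suc s) / real (n + 1)}.
                      (-1) ^ d / of_nat d)))))"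
    using part1 part2 by blast

end
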